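(* Let $n\geq 1$ be an integer and let $L_1,L_2$ be two distinct regular fibres of the $(n,1)$-Seifert fibration $\mathcal{S}_{n,1}\colon S^3\to\mathbb{C}P(1)$, $(z_1,z_2)\mapsto[z_2/z_1^{n}]$. Then there exists a smooth non-singular vector field $X_n$ on $S^3$ which is positively collinear to $H_{n,1}$ at every point of $L_1$, negatively collinear to $H_{n,1}$ at every point of $L_2$, and not collinear to $H_{n,1}$ at any point of $S^3\setminus(L_1\cup L_2)$.
   Context: $S^3=\{(z_1,z_2)\in\mathbb{C}^2: |z_1|^2+|z_2|^2=1\}$. For relatively prime integers $p\neq0$, $q>0$, the $(p,q)$-Seifert fibration is $\mathcal{S}_{p,q}(z_1,z_2)=[z_2^q/z_1^p]\in\mathbb{C}P(1)\cong S^2$; its fibres are circles, the two singular fibres being $\{z_1=0\}$ and $\{z_2=0\}$ and the others (regular fibres) being $(p,q)$-torus knots on the tori $|z_1|=a,|z_2|=b$. $H_{p,q}$ is the unit vector field tangent to the fibres of $\mathcal{S}_{p,q}$, oriented by the circle action $(z_1,z_2)\mapsto(e^{iqt}z_1,e^{ipt}z_2)$ (so $H_{1,1}(z_1,z_2)=(iz_1,iz_2)$). *)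

theory Defs
  imports "HOL-Analysis.Analysis"
begin

coinductive smooth_map :: "('a::real_normed_vector \<Rightarrow> 'b::real_normed_vector) \<Rightarrow> bool" where
  "(\<forall>x. f differentiable (at x)) \<Longrightarrow>
   (\<forall>v. smooth_map (\<lambda>x. frechet_derivative f (at x) v)) \<Longrightarrow> smooth_map f"

definition S3 :: "(complex \<times> complex) set" where
  "S3 = {z. (cmod (fst z))\<^sup>2 + (cmod (snd z))\<^sup>2 = 1}"

text \<open>Fibre of the (n,1)-Seifert fibration (z1,z2) \<mapsto> [z2 : z1^n] through the point a.\<close>
definition seifert_fibre :: "nat \<Rightarrow> complex \<times> complex \<Rightarrow> (complex \<times> complex) set" where
  "seifert_fibre n a = {z \<in> S3. snd z * fst a ^ n = snd a * fst z ^ n}"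

text \<open>Regular fibres: those other than the singular fibres {z1 = 0} and {z2 = 0}.\<close>
definition regular_fibre :: "nat \<Rightarrow> (complex \<times> complex) set \<Rightarrow> bool" where
  "regular_fibre n L \<longleftrightarrow> (\<exists>a \<in> S3. fst a \<noteq> 0 \<and> snd a \<noteq> 0 \<and> L = seifert_fibre n a)"

text \<open>Unit vector field H_{n,1} tangent to the fibres, oriented by the circle action
(z1,z2) \<mapsto> (e^{it} z1, e^{int} z2).\<close>
definition H :: "nat \<Rightarrow> complex \<times> complex \<Rightarrow> complex \<times> complex" where
  "H n z = (let V = (\<i> * fst z, \<i> * of_nat n * snd z) in (1 / norm V) *\<^sub>R V)"

end

theory Submission imports Defs begin


inductive polyfun :: "('a::real_normed_vector \<Rightarrow> 'b::real_normed_algebra) \<Rightarrow> bool" where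
  pconst: "polyfun (\<lambda>x. c)"
| plin: "bounded_linear f \<Longrightarrow> polyfun f"
| padd: "polyfun f \<Longrightarrow> polyfun g \<Longrightarrow> polyfun (\<lambda>x. f x + g x)"
| pmult: "polyfun f \<Longrightarrow> polyfun g \<Longrightarrow> polyfun (\<lambda>x. f x * g x)"

lemma polyfun_has_derivative:
  "polyfun f \<Longrightarrow> \<exists>D. (f has_derivative D) (at x) \<and> (\<forall>v. polyfun (\<lambda>y. frechet_derivative f (at y) v))"
proof (induction f arbitrary: x rule: polyfun.induct)
  case (pconst c)
  have "\<And>y. frechet_derivative (\<lambda>x. c) (at y) = (\<lambda>v. 0)"
    by (metis frechet_derivative_at has_derivative_const)
  then show ?case using polyfun.pconst by (auto intro!: exI[of _ "\<lambda>v. 0"])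
next
  case (plin f)
  have "\<And>y. frechet_derivative f (at y) = f"
    by (metis frechet_derivative_at bounded_linear.has_derivative[OF plin has_derivative_ident])
  then show ?case using polyfun.pconst plin
    by (auto intro!: exI[of _ f] bounded_linear.has_derivative[OF plin has_derivative_ident])
next
  case (padd f g)
  have df: "\<And>y. (f has_derivative frechet_derivative f (at y)) (at y)"
    using padd.IH frechet_derivative_works differentiable_def by metis
  have dg: "\<And>y. (g has_derivative frechet_derivative g (at y)) (at y)"
    using padd.IH frechet_derivative_works differentiable_def by metis
  have e: "\<And>y. frechet_derivative (\<lambda>x. f x + g x) (at y) = (\<lambda>v. frechet_derivative f (at y) v + frechet_derivative g (at y) v)"
    by (rule frechet_derivative_at[OF has_derivative_add[OF df dg], symmetric])
  show ?case
    using df dg padd.IH by (auto simp: e intro!: has_derivative_add polyfun.padd)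
next
  case (pmult f g)
  have df: "\<And>y. (f has_derivative frechet_derivative f (at y)) (at y)"
    using pmult.IH frechet_derivative_works differentiable_def by metis
  have dg: "\<And>y. (g has_derivative frechet_derivative g (at y)) (at y)"
    using pmult.IH frechet_derivative_works differentiable_def by metis
  have e: "\<And>y. frechet_derivative (\<lambda>x. f x * g x) (at y) = (\<lambda>v. f y * frechet_derivative g (at y) v + frechet_derivative f (at y) v * g y)"
    by (rule frechet_derivative_at[OF has_derivative_mult[OF df dg], symmetric])
  show ?case
    using df dg pmult.IH pmult.hyps by (auto simp: e intro!: has_derivative_mult polyfun.padd polyfun.pmult)
qed

lemma polyfun_smooth: "polyfun f \<Longrightarrow> smooth_map f"
proof (coinduction arbitrary: f rule: smooth_map.coinduct)
  case (smooth_map f)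
  then show ?case using polyfun_has_derivative differentiable_def by blast
qed

lemma smooth_pair:
  fixes f :: "'a::real_normed_vector \<Rightarrow> 'b::real_normed_vector" and g :: "'a \<Rightarrow> 'c::real_normed_vector"
  assumes "smooth_map f" "smooth_map g"
  shows "smooth_map (\<lambda>x. (f x, g x))"
  using assms
proof (coinduction arbitrary: f g rule: smooth_map.coinduct)
  case (smooth_map f g)
  have f1: "\<forall>x. f differentiable (at x)" "\<forall>v. smooth_map (\<lambda>x. frechet_derivative f (at x) v)"
    using smooth_map(1) by (auto elim: smooth_map.cases)
  have g1: "\<forall>x. g differentiable (at x)" "\<forall>v. smooth_map (\<lambda>x. frechet_derivative g (at x) v)"
    using smooth_map(2) by (auto elim: smooth_map.cases)
  have df: "\<And>y. (f has_derivative frechet_derivative f (at y)) (at y)"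
    using f1 frechet_derivative_works by blast
  have dg: "\<And>y. (g has_derivative frechet_derivative g (at y)) (at y)"
    using g1 frechet_derivative_works by blast
  have e: "\<And>y. frechet_derivative (\<lambda>x. (f x, g x)) (at y) = (\<lambda>v. (frechet_derivative f (at y) v, frechet_derivative g (at y) v))"
    by (rule frechet_derivative_at[OF has_derivative_Pair[OF df dg], symmetric])
  have D: "\<forall>x. (\<lambda>x. (f x, g x)) differentiable (at x)"
    using df dg by (auto simp: differentiable_def intro: has_derivative_Pair)
  have W: "\<forall>v. \<exists>f' g'. (\<lambda>x. frechet_derivative (\<lambda>x. (f x, g x)) (at x) v) = (\<lambda>x. (f' x, g' x)) \<and> smooth_map f' \<and> smooth_map g'"
  proof
    fix v
    show "\<exists>f' g'. (\<lambda>x. frechet_derivative (\<lambda>x. (f x, g x)) (at x) v) = (\<lambda>x. (f' x, g' x)) \<and> smooth_map f' \<and> smooth_map g'"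
      by (rule exI[of _ "\<lambda>x. frechet_derivative f (at x) v"], rule exI[of _ "\<lambda>x. frechet_derivative g (at x) v"]) (simp add: e f1 g1)
  qed
  show ?case
    apply (rule exI[of _ "\<lambda>x. (f x, g x)"])
    apply (intro conjI refl D allI disjI1)
    apply (rule W[rule_format])
    done
qed


lemma polyfun_pow: "polyfun f \<Longrightarrow> polyfun (\<lambda>x. (f x :: 'b::real_normed_algebra_1) ^ k)"
proof (induction k)
  case 0 then show ?case using polyfun.pconst[of 1] by simp
next
  case (Suc k) then show ?case using polyfun.pmult[of f "\<lambda>x. f x ^ k"] by simp
qed

lemma polyfun_neg: "polyfun f \<Longrightarrow> polyfun (\<lambda>x. - (f x :: 'b::real_normed_algebra_1))"
  using polyfun.pmult[OF polyfun.pconst[of "-1"], of f] by simp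

lemma polyfun_diff: "polyfun f \<Longrightarrow> polyfun g \<Longrightarrow> polyfun (\<lambda>x. f x - (g x :: 'b::real_normed_algebra_1))"
  using polyfun.padd[of f "\<lambda>x. - g x"] polyfun_neg[of g] by simp

lemma pf_fst: "polyfun (\<lambda>z::complex\<times>complex. fst z)"
  by (rule polyfun.plin) (rule bounded_linear_fst)
lemma pf_snd: "polyfun (\<lambda>z::complex\<times>complex. snd z)"
  by (rule polyfun.plin) (rule bounded_linear_snd)
lemma pf_cfst: "polyfun (\<lambda>z::complex\<times>complex. cnj (fst z))"
  by (rule polyfun.plin) (rule bounded_linear_compose[OF bounded_linear_cnj bounded_linear_fst])
lemma pf_csnd: "polyfun (\<lambda>z::complex\<times>complex. cnj (snd z))"
  by (rule polyfun.plin) (rule bounded_linear_compose[OF bounded_linear_cnj bounded_linear_snd])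

lemma pf_P: "polyfun (\<lambda>z::complex\<times>complex. snd z * c ^ n - d * fst z ^ n)"
  by (intro polyfun_diff polyfun.pmult polyfun.pconst pf_snd polyfun_pow pf_fst)
lemma pf_Q: "polyfun (\<lambda>z::complex\<times>complex. cnj (snd z) * c - d * cnj (fst z) ^ n)"
  by (intro polyfun_diff polyfun.pmult polyfun.pconst pf_csnd polyfun_pow pf_cfst)

lemma inner0:
  "inner (z1, z2) (complex_of_real f * (\<i>*z1) + g * (- cnj z2),
                   complex_of_real f * (\<i> * of_nat n * z2) + g * cnj z1) = 0"
  by (simp add: inner_complex_def algebra_simps)

lemma core:
  fixes z1 z2 g :: complex and f c :: real
  assumes s: "cmod z1^2 + cmod z2^2 = 1" and n: "n \<ge> 1"
   and e1: "of_real f * (\<i>*z1) + g * (- cnj z2) = of_real c * (\<i>*z1)"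
   and e2: "of_real f * (\<i> * of_nat n * z2) + g * cnj z1 = of_real c * (\<i> * of_nat n * z2)"
  shows "g = 0 \<and> f = c"
proof -
  define d where "d = f - c"
  have a1: "of_real d * (\<i>*z1) = g * cnj z2" using e1 by (simp add: d_def algebra_simps)
  have a2: "of_real d * (\<i> * of_nat n * z2) = - g * cnj z1" using e2 by (simp add: d_def algebra_simps)
  have "of_real d * \<i> * (z1 * cnj z1 + of_nat n * (z2 * cnj z2))
        = (of_real d * (\<i>*z1)) * cnj z1 + (of_real d * (\<i> * of_nat n * z2)) * cnj z2"
    by (simp add: algebra_simps)
  also have "\<dots> = g * cnj z2 * cnj z1 + (- g * cnj z1) * cnj z2" by (simp only: a1 a2)
  also have "\<dots> = 0" by (simp add: algebra_simps)
  finally have z: "of_real d * \<i> * (z1 * cnj z1 + of_nat n * (z2 * cnj z2)) = 0" .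
  have "z1 * cnj z1 + of_nat n * (z2 * cnj z2) = of_real (cmod z1^2 + real n * cmod z2^2)"
    by (simp only: of_real_add of_real_mult of_real_of_nat_eq complex_norm_square)
  moreover have "cmod z1^2 + real n * cmod z2^2 \<ge> 1"
  proof -
    have "real n * cmod z2^2 \<ge> 1 * cmod z2^2" using n by (intro mult_right_mono) auto
    then show ?thesis using s by simp
  qed
  ultimately have "z1 * cnj z1 + of_nat n * (z2 * cnj z2) \<noteq> 0" by (metis not_one_le_zero of_real_eq_0_iff)
  with z have d0: "d = 0" by simp
  then have "g * cnj z2 = 0" "g * cnj z1 = 0" using a1 a2 by auto
  moreover have "z1 \<noteq> 0 \<or> z2 \<noteq> 0" using s by auto
  ultimately have "g = 0" by auto
  then show ?thesis using d0 d_def by simp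
qed

lemma fib_eq:
  fixes a1 a2 b1 b2 z1 z2 y1 y2 :: complex
  assumes "z1 \<noteq> 0" "a1 \<noteq> 0" "b1 \<noteq> 0" "z2 * a1^n = a2 * z1^n" "z2 * b1^n = b2 * z1^n"
  shows "y2 * a1^n = a2 * y1^n \<longleftrightarrow> y2 * b1^n = b2 * y1^n"
proof -
  have "a2 * b1^n * z1^n = b2 * a1^n * z1^n"
  proof -
    have "a2 * b1^n * z1^n = (a2 * z1^n) * b1^n" by (simp add: ac_simps)
    also have "\<dots> = (z2 * a1^n) * b1^n" by (simp add: assms(4))
    also have "\<dots> = (z2 * b1^n) * a1^n" by (simp add: ac_simps)
    also have "\<dots> = (b2 * z1^n) * a1^n" by (simp add: assms(5))
    also have "\<dots> = b2 * a1^n * z1^n" by (simp add: ac_simps)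
    finally show ?thesis .
  qed
  then have k: "a2 * b1^n = b2 * a1^n" using assms(1) by simp
  have "y2 * a1^n = a2 * y1^n \<longleftrightarrow> y2 * a1^n * b1^n = a2 * y1^n * b1^n" using assms(3) by simp
  also have "\<dots> \<longleftrightarrow> (y2 * b1^n) * a1^n = (b2 * y1^n) * a1^n"
  proof -
    have "a2 * y1^n * b1^n = (a2 * b1^n) * y1^n" by (simp add: ac_simps)
    also have "\<dots> = (b2 * a1^n) * y1^n" by (simp add: k)
    also have "\<dots> = (b2 * y1^n) * a1^n" by (simp add: ac_simps)
    finally have e: "a2 * y1^n * b1^n = (b2 * y1^n) * a1^n" .
    have h: "y2 * a1^n * b1^n = (y2 * b1^n) * a1^n" by (simp add: ac_simps)
    show ?thesis unfolding h e by (rule refl)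
  qed
  also have "\<dots> \<longleftrightarrow> y2 * b1^n = b2 * y1^n" using assms(2) by simp
  finally show ?thesis .
qed


theorem lemma7:
  fixes n :: nat and L1 L2 :: "(complex \<times> complex) set"
  assumes "n \<ge> 1" and "regular_fibre n L1" and "regular_fibre n L2" and "L1 \<noteq> L2"
  shows "\<exists>X :: complex \<times> complex \<Rightarrow> complex \<times> complex.
           smooth_map X \<and>
           (\<forall>z \<in> S3. inner z (X z) = 0 \<and> X z \<noteq> 0) \<and>
           (\<forall>z \<in> L1. \<exists>c > 0. X z = c *\<^sub>R H n z) \<and>
           (\<forall>z \<in> L2. \<exists>c < 0. X z = c *\<^sub>R H n z) \<and>
           (\<forall>z \<in> S3 - (L1 \<union> L2). \<not> (\<exists>c. X z = c *\<^sub>R H n z))"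
proof -
  obtain a where a: "a \<in> S3" "fst a \<noteq> 0" "snd a \<noteq> 0" "L1 = seifert_fibre n a"
    using assms(2) unfolding regular_fibre_def by blast
  obtain b where b: "b \<in> S3" "fst b \<noteq> 0" "snd b \<noteq> 0" "L2 = seifert_fibre n b"
    using assms(3) unfolding regular_fibre_def by blast
  define P1 where "P1 z = snd z * fst a ^ n - snd a * fst z ^ n" for z :: "complex \<times> complex"
  define P2 where "P2 z = snd z * fst b ^ n - snd b * fst z ^ n" for z :: "complex \<times> complex"
  define F where "F z = cmod (P2 z)^2 - cmod (P1 z)^2" for z
  define G where "G z = P1 z * P2 z" for z
  define V where "V z = (\<i> * fst z, \<i> * of_nat n * snd z)" for z :: "complex \<times> complex"
  define X where "X z = (complex_of_real (F z) * (\<i> * fst z) + G z * (- cnj (snd z)),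
                         complex_of_real (F z) * (\<i> * of_nat n * snd z) + G z * cnj (fst z))" for z
  have S3i: "z \<in> S3 \<longleftrightarrow> cmod (fst z)^2 + cmod (snd z)^2 = 1" for z by (simp add: S3_def)
  have L1i: "z \<in> L1 \<longleftrightarrow> z \<in> S3 \<and> P1 z = 0" for z by (auto simp: a(4) seifert_fibre_def P1_def)
  have L2i: "z \<in> L2 \<longleftrightarrow> z \<in> S3 \<and> P2 z = 0" for z by (auto simp: b(4) seifert_fibre_def P2_def)
  have disj: False if "z \<in> L1" "z \<in> L2" for z
  proof -
    have z: "z \<in> S3" "P1 z = 0" "P2 z = 0" using that L1i L2i by auto
    have "fst z \<noteq> 0"
    proof
      assume "fst z = 0"
      then have "snd z = 0" using z(2) a(2) assms(1) by (simp add: P1_def zero_power)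
      then show False using z(1) \<open>fst z = 0\<close> by (simp add: S3i)
    qed
    have "L1 = L2"
    proof (intro set_eqI)
      fix y
      have "snd y * fst a ^ n = snd a * fst y ^ n \<longleftrightarrow> snd y * fst b ^ n = snd b * fst y ^ n"
        by (rule fib_eq[OF \<open>fst z \<noteq> 0\<close> a(2) b(2)]) (use z in \<open>auto simp: P1_def P2_def\<close>)
      then show "y \<in> L1 \<longleftrightarrow> y \<in> L2" by (simp add: L1i L2i P1_def P2_def)
    qed
    then show False using assms(4) by simp
  qed
  have Vnz: "norm (V z) > 0" if "z \<in> S3" for z
  proof -
    have "V z \<noteq> 0"
    proof
      assume "V z = 0"
      then have "fst z = 0" "snd z = 0" using assms(1) by (auto simp: V_def zero_prod_def)
      then show False using that by (simp add: S3i)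
    qed
    then show ?thesis by simp
  qed
  have HV: "H n z = (1 / norm (V z)) *\<^sub>R V z" for z by (simp add: H_def V_def Let_def)
  have coll: "G z = 0 \<and> F z = c / norm (V z)" if "z \<in> S3" "X z = c *\<^sub>R H n z" for z c
  proof -
    have "X z = (c / norm (V z)) *\<^sub>R V z" using that(2) by (simp add: HV)
    then have e1: "complex_of_real (F z) * (\<i> * fst z) + G z * (- cnj (snd z)) = of_real (c / norm (V z)) * (\<i> * fst z)"
      and e2: "complex_of_real (F z) * (\<i> * of_nat n * snd z) + G z * cnj (fst z) = of_real (c / norm (V z)) * (\<i> * of_nat n * snd z)"
      by (simp_all add: X_def V_def scaleR_conv_of_real)
    show ?thesis using core[OF _ assms(1) e1 e2] that(1) by (simp add: S3i)
  qed
  have Gz: "z \<in> L1 \<or> z \<in> L2" if "z \<in> S3" "G z = 0" for z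
    using that by (auto simp: G_def L1i L2i)
  have F1: "F z > 0" if "z \<in> L1" for z
  proof -
    have "P1 z = 0" using that L1i by auto
    moreover have "P2 z \<noteq> 0" using that disj L1i L2i by blast
    ultimately show ?thesis by (simp add: F_def)
  qed
  have F2: "F z < 0" if "z \<in> L2" for z
  proof -
    have "P2 z = 0" using that L2i by auto
    moreover have "P1 z \<noteq> 0" using that disj L1i L2i by blast
    ultimately show ?thesis by (simp add: F_def)
  qed
  have XL: "X z = (F z * norm (V z)) *\<^sub>R H n z" if "z \<in> S3" "G z = 0" for z
    using that Vnz[OF that(1)] by (simp add: X_def HV V_def scaleR_conv_of_real)
  have smooth: "smooth_map X"
  proof -
    have cP1: "cnj (P1 z) = cnj (snd z) * cnj (fst a) ^ n - cnj (snd a) * cnj (fst z) ^ n" for z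
      by (simp add: P1_def)
    have cP2: "cnj (P2 z) = cnj (snd z) * cnj (fst b) ^ n - cnj (snd b) * cnj (fst z) ^ n" for z
      by (simp add: P2_def)
    have Fc: "complex_of_real (F z) = P2 z * cnj (P2 z) - P1 z * cnj (P1 z)" for z
      by (simp only: F_def of_real_diff complex_norm_square)
    have p1: "polyfun P1" unfolding P1_def by (rule pf_P)
    have p2: "polyfun P2" unfolding P2_def by (rule pf_P)
    have q1: "polyfun (\<lambda>z. cnj (P1 z))" unfolding cP1 by (rule pf_Q)
    have q2: "polyfun (\<lambda>z. cnj (P2 z))" unfolding cP2 by (rule pf_Q)
    have pF: "polyfun (\<lambda>z. complex_of_real (F z))" unfolding Fc
      by (intro polyfun_diff polyfun.pmult p1 p2 q1 q2)
    have pG: "polyfun G" unfolding G_def by (intro polyfun.pmult p1 p2)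
    have c1: "polyfun (\<lambda>z. complex_of_real (F z) * (\<i> * fst z) + G z * (- cnj (snd z)))"
      by (intro polyfun.padd polyfun.pmult pF pG polyfun.pconst pf_fst polyfun_neg pf_csnd)
    have c2: "polyfun (\<lambda>z. complex_of_real (F z) * (\<i> * of_nat n * snd z) + G z * cnj (fst z))"
      by (intro polyfun.padd polyfun.pmult pF pG polyfun.pconst pf_snd pf_cfst)
    have "smooth_map (\<lambda>z. (complex_of_real (F z) * (\<i> * fst z) + G z * (- cnj (snd z)),
                         complex_of_real (F z) * (\<i> * of_nat n * snd z) + G z * cnj (fst z)))"
      by (rule smooth_pair[OF polyfun_smooth[OF c1] polyfun_smooth[OF c2]])
    then show ?thesis unfolding X_def[abs_def] .
  qed
  show ?thesis
  proof (intro exI[of _ X] conjI ballI)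
    show "smooth_map X" by (rule smooth)
  next
    fix z assume z: "z \<in> S3"
    show "inner z (X z) = 0"
      using inner0[of "fst z" "snd z" "F z" "G z" n] by (simp add: X_def)
    show "X z \<noteq> 0"
    proof
      assume "X z = 0"
      then have "X z = 0 *\<^sub>R H n z" by simp
      from coll[OF z this] have "G z = 0" "F z = 0" by auto
      then show False using Gz[OF z] F1 F2 by fastforce
    qed
  next
    fix z assume z: "z \<in> L1"
    then have "z \<in> S3" "G z = 0" using L1i by (auto simp: G_def)
    then show "\<exists>c>0. X z = c *\<^sub>R H n z"
      using XL F1[OF z] Vnz by (intro exI[of _ "F z * norm (V z)"]) auto
  next
    fix z assume z: "z \<in> L2"
    then have "z \<in> S3" "G z = 0" using L2i by (auto simp: G_def)
    then show "\<exists>c<0. X z = c *\<^sub>R H n z"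
      using XL F2[OF z] Vnz by (intro exI[of _ "F z * norm (V z)"]) (auto simp: mult_neg_pos)
  next
    fix z assume z: "z \<in> S3 - (L1 \<union> L2)"
    show "\<not> (\<exists>c. X z = c *\<^sub>R H n z)"
    proof
      assume "\<exists>c. X z = c *\<^sub>R H n z"
      then obtain c where "X z = c *\<^sub>R H n z" by blast
      with coll z have "G z = 0" by blast
      with Gz z show False by blast
    qed
  qed
qed

end
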